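(* Let $\{\phi_j\}_{j\in\mathbb Z}$ be the Fourier basis $\phi_j(t)=e^{\mathrm ij\pi t}$, $T=\{t_n\}_{n=1}^N\subseteq[-1,1]$ scattered points with density $h$, and suppose $hM\le1$. Then $$E_2(h,M)\lesssim hM,\qquad E_\infty(h,M)\lesssim hM^{3/2}.$$
   Context: Fourier setting: $D=(-1,1)$, $\nu=1/2$. $h=\sup_{t\in(-1,1)}\min_n|t-t_n|$; Voronoi cells $V_n=\{t\in(-1,1):|t-t_n|\le|t-t_m|\ \forall m\ne n\}$; $\tau_n=\int_{V_n}\nu$. $U_{n,j}=\sqrt{\tau_n}\phi_j(t_n)$, $j\in\mathbb Z$; $P_M$ is the coordinate projection onto indices $\{-M,\dots,M-1\}$. $E_2(h,M)=\|P_M-P_MU^*UP_M\|$ ($\ell^2$ operator norm) and $E_\infty(h,M)=\|P_M-P_MU^*UP_M\|_\infty$ ($\ell^\infty$ operator norm). $a\lesssim b$ means $a\le Cb$ with $C$ independent of $h$, $M$, $N$, $T$. *)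

theory Defs
  imports "HOL-Analysis.Analysis"
begin

definition phi :: "int \<Rightarrow> real \<Rightarrow> complex" where
  "phi j t = exp (\<i> * complex_of_real (of_int j * pi * t))"

definition fill_dist :: "nat \<Rightarrow> (nat \<Rightarrow> real) \<Rightarrow> real" where
  "fill_dist N tp = (SUP t\<in>{-1<..<1}. Min ((\<lambda>n. \<bar>t - tp n\<bar>) ` {1..N}))"

definition voronoi :: "nat \<Rightarrow> (nat \<Rightarrow> real) \<Rightarrow> nat \<Rightarrow> real set" where
  "voronoi N tp n = {t\<in>{-1<..<1}. \<forall>m\<in>{1..N}. m \<noteq> n \<longrightarrow> \<bar>t - tp n\<bar> \<le> \<bar>t - tp m\<bar>}"

text \<open>Quadrature weight tau_n = integral of nu = 1/2 over the Voronoi cell.\<close>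
definition tau :: "nat \<Rightarrow> (nat \<Rightarrow> real) \<Rightarrow> nat \<Rightarrow> real" where
  "tau N tp n = measure lborel (voronoi N tp n) / 2"

definition idx :: "nat \<Rightarrow> int set" where
  "idx M = {- int M .. int M - 1}"

text \<open>Entries of P_M - P_M U^* U P_M, where U_{n,j} = sqrt(tau_n) phi_j(t_n);
  (U^* U)_{j,k} = sum_n tau_n conj(phi_j(t_n)) phi_k(t_n).\<close>
definition err_mat :: "nat \<Rightarrow> (nat \<Rightarrow> real) \<Rightarrow> int \<Rightarrow> int \<Rightarrow> complex" where
  "err_mat N tp j k = (if j = k then 1 else 0)
     - (\<Sum>n\<in>{1..N}. complex_of_real (sqrt (tau N tp n)) * cnj (phi j (tp n))
                      * (complex_of_real (sqrt (tau N tp n)) * phi k (tp n)))"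

definition op_norm2 :: "int set \<Rightarrow> (int \<Rightarrow> int \<Rightarrow> complex) \<Rightarrow> real" where
  "op_norm2 I A = Sup {sqrt (\<Sum>j\<in>I. (cmod (\<Sum>k\<in>I. A j k * x k))\<^sup>2) | x.
                         (\<Sum>k\<in>I. (cmod (x k))\<^sup>2) \<le> 1}"

definition op_norm_inf :: "int set \<Rightarrow> (int \<Rightarrow> int \<Rightarrow> complex) \<Rightarrow> real" where
  "op_norm_inf I A = (if I = {} then 0 else Max ((\<lambda>j. \<Sum>k\<in>I. cmod (A j k)) ` I))"

definition E2 :: "nat \<Rightarrow> (nat \<Rightarrow> real) \<Rightarrow> nat \<Rightarrow> real" where
  "E2 N tp M = op_norm2 (idx M) (err_mat N tp)"

definition Einf :: "nat \<Rightarrow> (nat \<Rightarrow> real) \<Rightarrow> nat \<Rightarrow> real" where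
  "Einf N tp M = op_norm_inf (idx M) (err_mat N tp)"

end

theory Submission
  imports Defs
begin


lemma halfline_interval:
  fixes a b x c d :: real
  assumes "\<bar>a - c\<bar> \<le> \<bar>a - d\<bar>" "\<bar>b - c\<bar> \<le> \<bar>b - d\<bar>" "a \<le> x" "x \<le> b"
  shows "\<bar>x - c\<bar> \<le> \<bar>x - d\<bar>"
proof -
  have sq: "\<bar>u - c\<bar> \<le> \<bar>u - d\<bar> \<longleftrightarrow> 2 * u * (d - c) \<le> d\<^sup>2 - c\<^sup>2" for u
    by (simp add: abs_le_square_iff power2_eq_square algebra_simps)
  have A: "2 * a * (d - c) \<le> d\<^sup>2 - c\<^sup>2" and B: "2 * b * (d - c) \<le> d\<^sup>2 - c\<^sup>2"
    using assms(1,2) sq by auto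
  have "2 * x * (d - c) \<le> d\<^sup>2 - c\<^sup>2"
  proof (cases "c \<le> d")
    case True
    then have "x * (d - c) \<le> b * (d - c)" using assms(4) by (intro mult_right_mono) auto
    then show ?thesis using B by linarith
  next
    case False
    then have "x * (d - c) \<le> a * (d - c)" using assms(3) by (intro mult_right_mono_neg) auto
    then show ?thesis using A by linarith
  qed
  then show ?thesis using sq by auto
qed

lemma fill_dist_ge:
  fixes tp :: "nat \<Rightarrow> real"
  assumes "N \<ge> 1" "tp ` {1..N} \<subseteq> {-1..1}" "t \<in> {-1<..<1}"
  shows "Min ((\<lambda>n. \<bar>t - tp n\<bar>) ` {1..N}) \<le> fill_dist N tp"
proof -
  have "bdd_above ((\<lambda>t. Min ((\<lambda>n. \<bar>t - tp n\<bar>) ` {1..N})) ` {-1<..<1})"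
  proof (rule bdd_aboveI2)
    fix s :: real assume s: "s \<in> {-1<..<1}"
    have "Min ((\<lambda>n. \<bar>s - tp n\<bar>) ` {1..N}) \<le> \<bar>s - tp 1\<bar>"
      using assms(1) by (intro Min_le) auto
    also have "tp 1 \<in> {-1..1}" using assms(1,2) by (auto simp: image_subset_iff)
    then have "\<bar>s - tp 1\<bar> \<le> 2" using s by auto
    finally show "Min ((\<lambda>n. \<bar>s - tp n\<bar>) ` {1..N}) \<le> 2" .
  qed
  then show ?thesis unfolding fill_dist_def using assms(3) by (rule cSUP_upper2) auto
qed

lemma quad_core:
  fixes tp :: "nat \<Rightarrow> real" and p p' :: "real \<Rightarrow> complex"
  assumes N1: "N \<ge> 1" and inj: "inj_on tp {1..N}" and rng: "tp ` {1..N} \<subseteq> {-1..1}"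
    and der: "\<And>t. t \<in> {-1..1} \<Longrightarrow> (p has_vector_derivative p' t) (at t within {-1..1})"
    and cont: "continuous_on {-1..1} p'"
  shows "cmod ((\<Sum>n\<in>{1..N}. complex_of_real (tau N tp n) * p (tp n)) - integral {-1..1} p / 2)
          \<le> fill_dist N tp * integral {-1..1} (\<lambda>t. cmod (p' t))"
proof -
  define h where "h = fill_dist N tp"
  define W where "W n = {s\<in>{-1..1}. \<forall>m\<in>{1..N}. \<bar>s - tp n\<bar> \<le> \<bar>s - tp m\<bar>}" for n
  have minle: "Min ((\<lambda>n. \<bar>t - tp n\<bar>) ` {1..N}) \<le> h" if "t \<in> {-1<..<1}" for t
    unfolding h_def using fill_dist_ge[OF N1 rng that] .
  have h0: "0 \<le> h"
  proof -
    have "Min ((\<lambda>n. \<bar>0 - tp n\<bar>) ` {1..N}) \<in> (\<lambda>n. \<bar>0 - tp n\<bar>) ` {1..N}"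
      using N1 by (intro Min_in) auto
    then have "0 \<le> Min ((\<lambda>n. \<bar>0 - tp n\<bar>) ` {1..N})" by auto
    also have "\<dots> \<le> h" using minle[of 0] by simp
    finally show ?thesis .
  qed
  have tpW: "tp n \<in> W n" if "n \<in> {1..N}" for n
    using that rng unfolding W_def by (auto simp: image_subset_iff)
  have WS: "W n \<subseteq> {-1..1}" for n unfolding W_def by auto
  have Wint: "\<exists>a b. W n = {a..b}" if n: "n \<in> {1..N}" for n
  proof -
    have "is_interval (W n)"
      unfolding is_interval_1 W_def
    proof (intro ballI allI impI)
      fix x y z assume x: "x \<in> {s\<in>{-1..1}. \<forall>m\<in>{1..N}. \<bar>s - tp n\<bar> \<le> \<bar>s - tp m\<bar>}"
        and y: "y \<in> {s\<in>{-1..1}. \<forall>m\<in>{1..N}. \<bar>s - tp n\<bar> \<le> \<bar>s - tp m\<bar>}"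
        and z: "x \<le> z \<and> z \<le> y"
      show "z \<in> {s\<in>{-1..1}. \<forall>m\<in>{1..N}. \<bar>s - tp n\<bar> \<le> \<bar>s - tp m\<bar>}"
      proof (intro CollectI conjI ballI)
        show "z \<in> {-1..1}" using x y z by auto
        fix m assume "m \<in> {1..N}"
        then have "\<bar>x - tp n\<bar> \<le> \<bar>x - tp m\<bar>" "\<bar>y - tp n\<bar> \<le> \<bar>y - tp m\<bar>" using x y by auto
        then show "\<bar>z - tp n\<bar> \<le> \<bar>z - tp m\<bar>" by (rule halfline_interval[OF _ _ conjunct1[OF z] conjunct2[OF z]])
      qed
    qed
    moreover have "compact (W n)"
    unfolding compact_eq_bounded_closed proof
      show "bounded (W n)" using WS[of n] bounded_subset[of "{-1..1::real}"] by auto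
      have "W n = {-1..1} \<inter> (\<Inter>m\<in>{1..N}. {s. \<bar>s - tp n\<bar> \<le> \<bar>s - tp m\<bar>})"
        unfolding W_def by auto
      also have "closed \<dots>"
        by (intro closed_Int closed_INT closed_atLeastAtMost ballI closed_Collect_le continuous_on_rabs continuous_on_diff continuous_on_id continuous_on_const)
      finally show "closed (W n)" .
    qed
    ultimately obtain a b where "W n = cbox a b" using is_interval_compact[of "W n"] by blast
    then show ?thesis by (metis cbox_interval)
  qed
  define a where "a n = Inf (W n)" for n
  define b where "b n = Sup (W n)" for n
  have Wab: "W n = {a n..b n} \<and> a n \<le> b n" if n: "n \<in> {1..N}" for n
  proof -
    obtain c d where cd: "W n = {c..d}" using Wint[OF n] by blast
    have "c \<le> d" using tpW[OF n] cd by auto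
    then show ?thesis unfolding a_def b_def using cd by auto
  qed
  have abS: "{a n..b n} \<subseteq> {-1..1}" if "n \<in> {1..N}" for n using Wab[OF that] WS by metis
  have Wunion: "(\<Union>n\<in>{1..N}. W n) = {-1..1}"
  proof
    show "(\<Union>n\<in>{1..N}. W n) \<subseteq> {-1..1}" using WS by blast
    show "{-1..1} \<subseteq> (\<Union>n\<in>{1..N}. W n)"
    proof
      fix s :: real assume s: "s \<in> {-1..1}"
      have "Min ((\<lambda>n. \<bar>s - tp n\<bar>) ` {1..N}) \<in> (\<lambda>n. \<bar>s - tp n\<bar>) ` {1..N}"
        using N1 by (intro Min_in) auto
      then obtain n where n: "n \<in> {1..N}" "\<bar>s - tp n\<bar> = Min ((\<lambda>n. \<bar>s - tp n\<bar>) ` {1..N})" by auto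
      have "\<forall>m\<in>{1..N}. \<bar>s - tp n\<bar> \<le> \<bar>s - tp m\<bar>" using n(2) by (auto intro: Min_le)
      then show "s \<in> (\<Union>n\<in>{1..N}. W n)" using n(1) s unfolding W_def by auto
    qed
  qed
  have Wneg: "pairwise (\<lambda>n m. negligible (W n \<inter> W m)) {1..N}"
  proof (rule pairwiseI)
    fix n m assume n: "n \<in> {1..N}" and m: "m \<in> {1..N}" and nm: "n \<noteq> m"
    have ne: "tp n \<noteq> tp m" using inj n m nm by (auto dest: inj_onD)
    have "W n \<inter> W m \<subseteq> {(tp n + tp m) / 2}"
    proof
      fix s assume "s \<in> W n \<inter> W m"
      then have "\<bar>s - tp n\<bar> = \<bar>s - tp m\<bar>" using n m unfolding W_def by force
      then have "s - tp n = s - tp m \<or> s - tp n = -(s - tp m)" by (smt (verit))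
      then show "s \<in> {(tp n + tp m) / 2}" using ne by auto
    qed
    then show "negligible (W n \<inter> W m)" using negligible_subset negligible_sing by metis
  qed
  have len: "b n - a n \<le> 2 * h" if n: "n \<in> {1..N}" for n
  proof (rule ccontr)
    assume "\<not> ?thesis"
    then have gt: "b n - a n > 2 * h" by simp
    define e where "e = (b n - a n - 2 * h) / 4"
    have e0: "e > 0" using gt by (simp add: e_def)
    have close: "\<bar>s - tp n\<bar> \<le> h" if s: "s \<in> {a n<..<b n}" for s
    proof -
      have sW: "s \<in> W n" using Wab[OF n] s by auto
      have "s \<in> {-1<..<1}" using abS[OF n] s by auto
      then have "Min ((\<lambda>n. \<bar>s - tp n\<bar>) ` {1..N}) \<le> h" by (rule minle)
      moreover have "\<bar>s - tp n\<bar> \<le> Min ((\<lambda>n. \<bar>s - tp n\<bar>) ` {1..N})"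
        using sW N1 unfolding W_def by (subst Min_ge_iff) auto
      ultimately show ?thesis by linarith
    qed
    have "\<bar>(a n + e) - tp n\<bar> \<le> h" using e0 gt h0 by (intro close) (auto simp: e_def field_simps)
    moreover have "\<bar>(b n - e) - tp n\<bar> \<le> h" using e0 gt h0 by (intro close) (auto simp: e_def field_simps)
    ultimately have "(b n - e) - (a n + e) \<le> 2 * h" by (simp only: abs_le_iff) linarith
    then show False using gt unfolding e_def by (simp add: field_simps)
  qed
  have tau_eq: "tau N tp n = (b n - a n) / 2" if n: "n \<in> {1..N}" for n
  proof -
    have vor: "voronoi N tp n = {a n..b n} \<inter> {-1<..<1}"
      using Wab[OF n] unfolding voronoi_def W_def by auto
    have ab1: "-1 \<le> a n" "b n \<le> 1" using abS[OF n] Wab[OF n] by auto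
    have "{a n<..<b n} \<subseteq> voronoi N tp n" unfolding vor using ab1 by auto
    have vs: "voronoi N tp n \<in> sets lborel" unfolding vor by simp
    have fI: "{a n..b n} \<in> fmeasurable lborel" using fmeasurable_cbox[of "a n" "b n"] by (simp add: cbox_interval)
    have vsub: "voronoi N tp n \<subseteq> {a n..b n}" unfolding vor by blast
    have vf: "voronoi N tp n \<in> fmeasurable lborel" by (rule fmeasurableI2[OF fI vsub vs])
    have "measure lborel {a n<..<b n} \<le> measure lborel (voronoi N tp n)"
      by (rule measure_mono_fmeasurable[OF \<open>{a n<..<b n} \<subseteq> voronoi N tp n\<close> _ vf]) simp
    moreover have "measure lborel (voronoi N tp n) \<le> measure lborel {a n..b n}"
      by (rule measure_mono_fmeasurable[OF vsub vs fI])
    ultimately have "measure lborel (voronoi N tp n) = b n - a n" using Wab[OF n] by auto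
    then show ?thesis unfolding tau_def by simp
  qed
  have contp: "continuous_on {-1..1} p"
    unfolding continuous_on_eq_continuous_within using der has_vector_derivative_continuous by blast
  have contd: "continuous_on {-1..1} (\<lambda>t. cmod (p' t))" using cont by (rule continuous_on_norm)
  have ip: "(p has_integral integral (W n) p) (W n)" if n: "n \<in> {1..N}" for n
  proof -
    have "p integrable_on {a n..b n}"
      by (rule integrable_continuous_interval[OF continuous_on_subset[OF contp abS[OF n]]])
    then show ?thesis using Wab[OF n] by (simp add: integrable_integral)
  qed
  have idd: "((\<lambda>t. cmod (p' t)) has_integral integral (W n) (\<lambda>t. cmod (p' t))) (W n)" if n: "n \<in> {1..N}" for n
  proof -
    have "(\<lambda>t. cmod (p' t)) integrable_on {a n..b n}"
      by (rule integrable_continuous_interval[OF continuous_on_subset[OF contd abS[OF n]]])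
    then show ?thesis using Wab[OF n] by (simp add: integrable_integral)
  qed
  have I1: "integral {-1..1} p = (\<Sum>n\<in>{1..N}. integral (W n) p)"
    using has_integral_UN[OF _ ip Wneg] Wunion by (simp add: integral_unique)
  have I2: "integral {-1..1} (\<lambda>t. cmod (p' t)) = (\<Sum>n\<in>{1..N}. integral (W n) (\<lambda>t. cmod (p' t)))"
    using has_integral_UN[OF _ idd Wneg] Wunion by (simp add: integral_unique)
  have bound: "cmod (p t - p (tp n)) \<le> integral {a n..b n} (\<lambda>s. cmod (p' s))"
    if n: "n \<in> {1..N}" and t: "t \<in> {a n..b n}" for n t
  proof -
    have tpn: "tp n \<in> {a n..b n}" using tpW[OF n] Wab[OF n] by auto
    have gen: "cmod (p v - p u) \<le> integral {a n..b n} (\<lambda>s. cmod (p' s))"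
      if uv: "u \<le> v" "u \<in> {a n..b n}" "v \<in> {a n..b n}" for u v
    proof -
      have sub: "{u..v} \<subseteq> {a n..b n}" using uv by auto
      have sub2: "{u..v} \<subseteq> {-1..1}" using sub abS[OF n] by blast
      have "(p' has_integral (p v - p u)) {u..v}"
      proof (rule fundamental_theorem_of_calculus[OF uv(1)])
        fix x assume "x \<in> {u..v}"
        then show "(p has_vector_derivative p' x) (at x within {u..v})"
          using der[of x] sub2 by (auto intro: has_vector_derivative_within_subset)
      qed
      then have "p v - p u = integral {u..v} p'" by (simp add: integral_unique)
      moreover have "cmod (integral {u..v} p') \<le> integral {u..v} (\<lambda>s. cmod (p' s))"
        by (rule integral_norm_bound_integral)
           (auto intro!: integrable_continuous_interval continuous_on_subset[OF cont sub2]
                 continuous_on_subset[OF contd sub2])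
      moreover have "integral {u..v} (\<lambda>s. cmod (p' s)) \<le> integral {a n..b n} (\<lambda>s. cmod (p' s))"
        by (rule integral_subset_le[OF sub])
           (auto intro!: integrable_continuous_interval continuous_on_subset[OF contd sub2]
                 continuous_on_subset[OF contd abS[OF n]])
      ultimately show ?thesis by simp
    qed
    show ?thesis
    proof (cases "tp n \<le> t")
      case True then show ?thesis using gen[OF True tpn t] by simp
    next
      case False
      then have "cmod (p (tp n) - p t) \<le> integral {a n..b n} (\<lambda>s. cmod (p' s))"
        using gen[of t "tp n"] tpn t by simp
      then show ?thesis by (simp add: norm_minus_commute)
    qed
  qed
  have tmb: "cmod (complex_of_real (tau N tp n) * p (tp n) - integral (W n) p / 2)
      \<le> h * integral (W n) (\<lambda>t. cmod (p' t))" if n: "n \<in> {1..N}" for n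
  proof -
    define J where "J = integral {a n..b n} (\<lambda>s. cmod (p' s))"
    have J0: "0 \<le> J" unfolding J_def
      by (rule integral_nonneg) (auto intro!: integrable_continuous_interval continuous_on_subset[OF contd abS[OF n]])
    have ab: "a n \<le> b n" using Wab[OF n] by simp
    have hi: "((\<lambda>t. p (tp n) - p t) has_integral
        (complex_of_real (b n - a n) * p (tp n) - integral (W n) p)) {a n..b n}"
      using has_integral_diff[OF has_integral_const_real[of "p (tp n)" "a n" "b n"] ip[OF n, unfolded conjunct1[OF Wab[OF n]]]]
        Wab[OF n] by (simp add: content_real scaleR_conv_of_real)
    have "cmod (complex_of_real (b n - a n) * p (tp n) - integral (W n) p) \<le> J * measure lborel (cbox (a n) (b n))"
      by (rule has_integral_bound[OF J0 hi[folded cbox_interval]])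
         (use bound[OF n] in \<open>auto simp: J_def norm_minus_commute cbox_interval\<close>)
    also have "\<dots> = J * (b n - a n)" using ab by (simp add: cbox_interval content_real)
    also have "\<dots> \<le> J * (2 * h)" using len[OF n] J0 by (intro mult_left_mono) auto
    finally have A: "cmod (complex_of_real (b n - a n) * p (tp n) - integral (W n) p) \<le> J * (2 * h)" .
    have "complex_of_real (tau N tp n) * p (tp n) - integral (W n) p / 2
        = (complex_of_real (b n - a n) * p (tp n) - integral (W n) p) / 2"
      unfolding tau_eq[OF n] by (simp add: field_simps)
    then have "cmod (complex_of_real (tau N tp n) * p (tp n) - integral (W n) p / 2)
        = cmod (complex_of_real (b n - a n) * p (tp n) - integral (W n) p) / 2" by (simp only: norm_divide norm_numeral)
    also have "\<dots> \<le> h * J" using A by (simp add: algebra_simps)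
    finally show ?thesis using Wab[OF n] by (simp add: J_def)
  qed
  have "(\<Sum>n\<in>{1..N}. complex_of_real (tau N tp n) * p (tp n)) - integral {-1..1} p / 2
      = (\<Sum>n\<in>{1..N}. complex_of_real (tau N tp n) * p (tp n) - integral (W n) p / 2)"
    unfolding I1 by (simp add: sum_subtractf sum_divide_distrib)
  then have "cmod ((\<Sum>n\<in>{1..N}. complex_of_real (tau N tp n) * p (tp n)) - integral {-1..1} p / 2)
      \<le> (\<Sum>n\<in>{1..N}. cmod (complex_of_real (tau N tp n) * p (tp n) - integral (W n) p / 2))"
    by (simp add: norm_sum)
  also have "\<dots> \<le> (\<Sum>n\<in>{1..N}. h * integral (W n) (\<lambda>t. cmod (p' t)))"
    by (rule sum_mono) (rule tmb)
  also have "\<dots> = h * integral {-1..1} (\<lambda>t. cmod (p' t))"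
    unfolding I2 by (simp add: sum_distrib_left)
  finally show ?thesis unfolding h_def .
qed



definition tpoly :: "int set \<Rightarrow> (int \<Rightarrow> complex) \<Rightarrow> real \<Rightarrow> complex" where
  "tpoly I c t = (\<Sum>k\<in>I. c k * phi k t)"

definition dco :: "(int \<Rightarrow> complex) \<Rightarrow> int \<Rightarrow> complex" where
  "dco c k = \<i> * complex_of_real (of_int k * pi) * c k"

lemma phi_deriv:
  "(phi k has_vector_derivative (\<i> * complex_of_real (of_int k * pi) * phi k t)) (at t within S)"
proof -
  have eq: "phi k = (\<lambda>x. exp (\<i> * complex_of_real (of_int k * pi) * complex_of_real x))"
    by (auto simp: phi_def fun_eq_iff mult.assoc)
  have "((\<lambda>z. exp (\<i> * complex_of_real (of_int k * pi) * z)) has_field_derivative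
      exp (\<i> * complex_of_real (of_int k * pi) * complex_of_real t) * (\<i> * complex_of_real (of_int k * pi)))
      (at (complex_of_real t))"
    by (auto intro!: derivative_eq_intros)
  from has_vector_derivative_real_field[OF this, of S] show ?thesis
    unfolding eq by (simp add: mult.commute)
qed

lemma phi_add: "phi a t * phi b t = phi (a + b) t"
  by (simp add: phi_def exp_add[symmetric] algebra_simps)

lemma phi_cnj: "cnj (phi a t) = phi (- a) t"
  by (simp add: phi_def exp_cnj)

lemma phi_cont: "continuous_on S (phi k)"
  unfolding phi_def by (intro continuous_intros)

lemma phi_int: "(phi m has_integral (if m = 0 then 2 else 0)) {-1..1}"
proof (cases "m = 0")
  case True
  then have "phi m = (\<lambda>_. 1)" by (auto simp: phi_def fun_eq_iff)
  then show ?thesis using True has_integral_const_real[of "1::complex" "-1" 1] by (simp add: scaleR_conv_of_real)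
next
  case False
  define c where "c = \<i> * complex_of_real (of_int m * pi)"
  have c0: "c \<noteq> 0" using False by (simp add: c_def)
  have "((\<lambda>t. phi m t / c) has_vector_derivative phi m x) (at x within {-1..1})" for x
    using has_vector_derivative_divide[OF phi_deriv[of m x "{-1..1}"], of c] c0
    by (simp add: c_def)
  then have "(phi m has_integral (phi m 1 / c - phi m (-1) / c)) {-1..1}"
    by (intro fundamental_theorem_of_calculus) auto
  moreover have "phi m 1 = phi m (-1)"
  proof -
    have "phi m 1 = cis (of_int m * pi)" by (simp add: phi_def cis_conv_exp)
    moreover have "phi m (-1) = cis (- (of_int m * pi))" by (simp add: phi_def cis_conv_exp)
    moreover have "sin (of_int m * pi) = 0" by (metis sin_npi_int mult.commute)
    ultimately show ?thesis by (simp add: cis.ctr)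
  qed
  ultimately show ?thesis using False by simp
qed

lemma tpoly_deriv:
  "(tpoly I c has_vector_derivative tpoly I (dco c) t) (at t within S)"
proof -
  have "((\<lambda>t. \<Sum>k\<in>I. c k * phi k t) has_vector_derivative
      (\<Sum>k\<in>I. c k * (\<i> * complex_of_real (of_int k * pi) * phi k t))) (at t within S)"
    by (intro has_vector_derivative_sum has_vector_derivative_mult_right phi_deriv)
  then show ?thesis unfolding tpoly_def dco_def by (simp add: mult_ac)
qed

lemma tpoly_cont: "continuous_on S (tpoly I c)"
  unfolding tpoly_def phi_def by (intro continuous_intros)

lemma tpoly_prod:
  "cnj (tpoly I c t) * tpoly I d t = (\<Sum>j\<in>I. \<Sum>k\<in>I. (cnj (c j) * d k) * phi (k - j) t)"
proof -
  have "cnj (tpoly I c t) * tpoly I d t = (\<Sum>j\<in>I. cnj (c j) * phi (- j) t) * (\<Sum>k\<in>I. d k * phi k t)"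
    by (simp add: tpoly_def phi_cnj)
  also have "\<dots> = (\<Sum>j\<in>I. \<Sum>k\<in>I. (cnj (c j) * d k) * (phi (- j) t * phi k t))"
    by (simp add: sum_distrib_left sum_distrib_right mult_ac)
  also have "\<dots> = (\<Sum>j\<in>I. \<Sum>k\<in>I. (cnj (c j) * d k) * phi (k - j) t)"
    by (simp add: phi_add)
  finally show ?thesis .
qed

lemma orth:
  assumes "finite I"
  shows "((\<lambda>t. cnj (tpoly I c t) * tpoly I d t) has_integral (2 * (\<Sum>k\<in>I. cnj (c k) * d k))) {-1..1}"
proof -
  have "((\<lambda>t. \<Sum>j\<in>I. \<Sum>k\<in>I. (cnj (c j) * d k) * phi (k - j) t) has_integral
      (\<Sum>j\<in>I. \<Sum>k\<in>I. (cnj (c j) * d k) * (if k - j = 0 then 2 else 0))) {-1..1}"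
    by (intro has_integral_sum assms has_integral_mult_right phi_int)
  moreover have "(\<Sum>j\<in>I. \<Sum>k\<in>I. (cnj (c j) * d k) * (if k - j = 0 then 2 else 0))
      = 2 * (\<Sum>k\<in>I. cnj (c k) * d k)"
  proof -
    have "(\<Sum>j\<in>I. \<Sum>k\<in>I. (cnj (c j) * d k) * (if k - j = 0 then 2 else 0))
        = (\<Sum>j\<in>I. \<Sum>k\<in>I. (if j = k then cnj (c j) * d k * 2 else 0))"
      by (intro sum.cong refl) auto
    also have "\<dots> = (\<Sum>j\<in>I. cnj (c j) * d j * 2)"
      using assms by (simp add: sum.delta)
    finally show ?thesis by (simp add: sum_distrib_left mult_ac)
  qed
  ultimately show ?thesis by (simp add: tpoly_prod)
qed

lemma normsq:
  assumes "finite I"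
  shows "((\<lambda>t. (cmod (tpoly I c t))\<^sup>2) has_integral (2 * (\<Sum>k\<in>I. (cmod (c k))\<^sup>2))) {-1..1}"
proof -
  have "((Re \<circ> (\<lambda>t. cnj (tpoly I c t) * tpoly I c t)) has_integral Re (2 * (\<Sum>k\<in>I. cnj (c k) * c k))) {-1..1}"
    by (rule has_integral_linear[OF orth[OF assms] bounded_linear_Re])
  moreover have "Re (cnj z * z) = (cmod z)\<^sup>2" for z
    using complex_norm_square[of z] by (metis Re_complex_of_real mult.commute)
  ultimately show ?thesis by (simp add: o_def Re_sum)
qed



lemma fill_dist_nonneg:
  fixes tp :: "nat \<Rightarrow> real"
  assumes N1: "N \<ge> 1" and rng: "tp ` {1..N} \<subseteq> {-1..1}"
  shows "0 \<le> fill_dist N tp"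
proof -
  have "Min ((\<lambda>n. \<bar>0 - tp n\<bar>) ` {1..N}) \<in> (\<lambda>n. \<bar>0 - tp n\<bar>) ` {1..N}"
    using N1 by (intro Min_in) auto
  then have "0 \<le> Min ((\<lambda>n. \<bar>0 - tp n\<bar>) ` {1..N})" by auto
  also have "\<dots> \<le> fill_dist N tp" using fill_dist_ge[OF N1 rng, of 0] by simp
  finally show ?thesis .
qed

lemma err_mat_alt:
  "err_mat N tp j k = (if j = k then 1 else 0)
     - (\<Sum>n\<in>{1..N}. complex_of_real (tau N tp n) * (cnj (phi j (tp n)) * phi k (tp n)))"
proof -
  have sq: "complex_of_real (sqrt (tau N tp n)) * a * (complex_of_real (sqrt (tau N tp n)) * b)
      = complex_of_real (tau N tp n) * (a * b)" for n a b
  proof -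
    have t0: "0 \<le> tau N tp n" unfolding tau_def by simp
    have "complex_of_real (sqrt (tau N tp n)) * a * (complex_of_real (sqrt (tau N tp n)) * b)
        = complex_of_real (sqrt (tau N tp n) * sqrt (tau N tp n)) * (a * b)"
      by (simp only: of_real_mult mult_ac)
    also have "sqrt (tau N tp n) * sqrt (tau N tp n) = tau N tp n" using t0 by simp
    finally show ?thesis .
  qed
  show ?thesis unfolding err_mat_def sq ..
qed

lemma bilin_identity:
  assumes "finite I"
  shows "(\<Sum>j\<in>I. cnj (y j) * (\<Sum>k\<in>I. err_mat N tp j k * x k))
    = (\<Sum>j\<in>I. cnj (y j) * x j)
      - (\<Sum>n\<in>{1..N}. complex_of_real (tau N tp n) * (cnj (tpoly I y (tp n)) * tpoly I x (tp n)))"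
proof -
  define T where "T n = complex_of_real (tau N tp n)" for n
  have A: "(\<Sum>k\<in>I. err_mat N tp j k * x k)
      = (if j \<in> I then x j else 0) - (\<Sum>k\<in>I. \<Sum>n\<in>{1..N}. T n * (cnj (phi j (tp n)) * phi k (tp n)) * x k)" for j
  proof -
    have D: "(\<Sum>k\<in>I. (if j = k then 1 else 0) * x k) = (if j \<in> I then x j else 0)"
    proof -
      have "(\<Sum>k\<in>I. (if j = k then 1 else 0) * x k) = (\<Sum>k\<in>I. if j = k then x k else 0)"
        by (intro sum.cong) auto
      also have "\<dots> = (if j \<in> I then x j else 0)" using assms by (simp add: sum.delta)
      finally show ?thesis .
    qed
    show ?thesis
      unfolding err_mat_alt T_def left_diff_distrib sum_subtractf D
      by (simp add: sum_distrib_right)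
  qed
  have B: "(\<Sum>n\<in>{1..N}. T n * (cnj (tpoly I y (tp n)) * tpoly I x (tp n)))
      = (\<Sum>j\<in>I. \<Sum>k\<in>I. \<Sum>n\<in>{1..N}. cnj (y j) * (T n * (cnj (phi j (tp n)) * phi k (tp n)) * x k))"
  proof -
    have "(\<Sum>n\<in>{1..N}. T n * (cnj (tpoly I y (tp n)) * tpoly I x (tp n)))
        = (\<Sum>n\<in>{1..N}. \<Sum>j\<in>I. \<Sum>k\<in>I. cnj (y j) * (T n * (cnj (phi j (tp n)) * phi k (tp n)) * x k))"
      unfolding tpoly_def
      by (simp add: sum_distrib_left sum_distrib_right mult_ac)
    also have "\<dots> = (\<Sum>j\<in>I. \<Sum>n\<in>{1..N}. \<Sum>k\<in>I. cnj (y j) * (T n * (cnj (phi j (tp n)) * phi k (tp n)) * x k))"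
      by (rule sum.swap)
    also have "\<dots> = (\<Sum>j\<in>I. \<Sum>k\<in>I. \<Sum>n\<in>{1..N}. cnj (y j) * (T n * (cnj (phi j (tp n)) * phi k (tp n)) * x k))"
      by (intro sum.cong refl sum.swap)
    finally show ?thesis .
  qed
  show ?thesis
    unfolding T_def[symmetric] B A
    by (simp add: right_diff_distrib sum_subtractf sum_distrib_left if_distrib cong: if_cong)
qed


lemma amgm: fixes a b L :: real assumes "L > 0" shows "a * b \<le> (L * a\<^sup>2 + b\<^sup>2 / L) / 2"
proof -
  have "0 \<le> (L * a - b)\<^sup>2" by simp
  then have "2 * L * (a * b) \<le> L\<^sup>2 * a\<^sup>2 + b\<^sup>2" by (simp add: power2_eq_square algebra_simps)
  then show ?thesis using assms by (simp add: field_simps power2_eq_square)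
qed

lemma dco_bound:
  assumes "finite I" "\<And>k. k \<in> I \<Longrightarrow> \<bar>k\<bar> \<le> int M"
  shows "(\<Sum>k\<in>I. (cmod (dco c k))\<^sup>2) \<le> (pi * real M)\<^sup>2 * (\<Sum>k\<in>I. (cmod (c k))\<^sup>2)"
proof -
  have "(cmod (dco c k))\<^sup>2 \<le> (pi * real M)\<^sup>2 * (cmod (c k))\<^sup>2" if k: "k \<in> I" for k
  proof -
    have "cmod (dco c k) = \<bar>real_of_int k\<bar> * pi * cmod (c k)"
      by (simp add: dco_def norm_mult abs_mult)
    moreover have "\<bar>real_of_int k\<bar> \<le> real M" using assms(2)[OF k] by linarith
    then have "\<bar>real_of_int k\<bar> * pi * cmod (c k) \<le> real M * pi * cmod (c k)"
      by (intro mult_right_mono) auto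
    ultimately have "cmod (dco c k) \<le> pi * real M * cmod (c k)" by (simp add: mult_ac)
    then have "(cmod (dco c k))\<^sup>2 \<le> (pi * real M * cmod (c k))\<^sup>2"
      by (intro power_mono) auto
    then show ?thesis by (simp add: power_mult_distrib)
  qed
  then show ?thesis by (simp add: sum_distrib_left sum_mono)
qed

lemma idx_bound: "k \<in> idx M \<Longrightarrow> \<bar>k\<bar> \<le> int M"
  by (auto simp: idx_def)

lemma bilin_bound:
  fixes tp :: "nat \<Rightarrow> real"
  assumes N1: "N \<ge> 1" and inj: "inj_on tp {1..N}" and rng: "tp ` {1..N} \<subseteq> {-1..1}"
    and M1: "M \<ge> 1"
  shows "cmod (\<Sum>j\<in>idx M. cnj (y j) * (\<Sum>k\<in>idx M. err_mat N tp j k * x k))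
     \<le> fill_dist N tp * (2 * pi * real M) * ((\<Sum>k\<in>idx M. (cmod (x k))\<^sup>2) + (\<Sum>k\<in>idx M. (cmod (y k))\<^sup>2))"
proof -
  define I where "I = idx M"
  have fin: "finite I" by (simp add: I_def idx_def)
  define X where "X = (\<Sum>k\<in>I. (cmod (x k))\<^sup>2)"
  define Y where "Y = (\<Sum>k\<in>I. (cmod (y k))\<^sup>2)"
  define L where "L = pi * real M"
  have L0: "L > 0" using M1 by (simp add: L_def)
  define p where "p t = cnj (tpoly I y t) * tpoly I x t" for t
  define p' where "p' t = cnj (tpoly I y t) * tpoly I (dco x) t + cnj (tpoly I (dco y) t) * tpoly I x t" for t
  have der: "(p has_vector_derivative p' t) (at t within {-1..1})" for t
    unfolding p_def[abs_def] p'_def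
    by (rule has_vector_derivative_mult[OF has_vector_derivative_cnj[OF tpoly_deriv] tpoly_deriv])
  have cont: "continuous_on {-1..1} p'"
    unfolding p'_def
    by (intro continuous_on_add continuous_on_mult continuous_on_cnj tpoly_cont)
  have core: "cmod ((\<Sum>n\<in>{1..N}. complex_of_real (tau N tp n) * p (tp n)) - integral {-1..1} p / 2)
      \<le> fill_dist N tp * integral {-1..1} (\<lambda>t. cmod (p' t))"
    by (rule quad_core[OF N1 inj rng der cont])
  have ip: "integral {-1..1} p = 2 * (\<Sum>k\<in>I. cnj (y k) * x k)"
    unfolding p_def by (rule integral_unique[OF orth[OF fin]])
  have lhs: "(\<Sum>j\<in>I. cnj (y j) * (\<Sum>k\<in>I. err_mat N tp j k * x k))
      = - ((\<Sum>n\<in>{1..N}. complex_of_real (tau N tp n) * p (tp n)) - integral {-1..1} p / 2)"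
    unfolding bilin_identity[OF fin] ip p_def by simp
  have ptw: "cmod (p' t) \<le> ((L * (cmod (tpoly I y t))\<^sup>2 + (cmod (tpoly I (dco x) t))\<^sup>2 / L) / 2
        + (L * (cmod (tpoly I x t))\<^sup>2 + (cmod (tpoly I (dco y) t))\<^sup>2 / L) / 2)" for t
  proof -
    have "cmod (p' t) \<le> cmod (tpoly I y t) * cmod (tpoly I (dco x) t) + cmod (tpoly I x t) * cmod (tpoly I (dco y) t)"
      unfolding p'_def using norm_triangle_ineq[of "cnj (tpoly I y t) * tpoly I (dco x) t" "cnj (tpoly I (dco y) t) * tpoly I x t"]
      by (simp add: norm_mult mult_ac)
    also have "\<dots> \<le> ((L * (cmod (tpoly I y t))\<^sup>2 + (cmod (tpoly I (dco x) t))\<^sup>2 / L) / 2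
        + (L * (cmod (tpoly I x t))\<^sup>2 + (cmod (tpoly I (dco y) t))\<^sup>2 / L) / 2)"
      by (intro add_mono amgm L0)
    finally show ?thesis .
  qed
  define DX where "DX = (\<Sum>k\<in>I. (cmod (dco x k))\<^sup>2)"
  define DY where "DY = (\<Sum>k\<in>I. (cmod (dco y k))\<^sup>2)"
  have hint: "((\<lambda>t. (L * (cmod (tpoly I y t))\<^sup>2 + (cmod (tpoly I (dco x) t))\<^sup>2 / L) / 2
        + (L * (cmod (tpoly I x t))\<^sup>2 + (cmod (tpoly I (dco y) t))\<^sup>2 / L) / 2) has_integral
        ((L * (2 * Y) + (2 * DX) / L) / 2 + (L * (2 * X) + (2 * DY) / L) / 2)) {-1..1}"
    unfolding X_def Y_def DX_def DY_def
    by (intro has_integral_add has_integral_divide has_integral_mult_right normsq fin)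
  have intp': "(\<lambda>t. cmod (p' t)) integrable_on {-1..1}"
    by (intro integrable_continuous_interval continuous_on_norm cont)
  have "integral {-1..1} (\<lambda>t. cmod (p' t)) \<le> (L * (2 * Y) + (2 * DX) / L) / 2 + (L * (2 * X) + (2 * DY) / L) / 2"
    by (rule has_integral_le[OF integrable_integral[OF intp'] hint ptw])
  also have "\<dots> = L * Y + DX / L + L * X + DY / L" by (simp add: field_simps)
  also have "\<dots> \<le> L * Y + L * X + L * X + L * Y"
  proof -
    have "DX \<le> L\<^sup>2 * X" unfolding DX_def X_def L_def I_def by (rule dco_bound) (auto simp: idx_def idx_bound)
    then have "DX / L \<le> L * X" using L0 by (simp add: field_simps power2_eq_square)
    moreover have "DY \<le> L\<^sup>2 * Y" unfolding DY_def Y_def L_def I_def by (rule dco_bound) (auto simp: idx_def idx_bound)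
    then have "DY / L \<le> L * Y" using L0 by (simp add: field_simps power2_eq_square)
    ultimately show ?thesis by linarith
  qed
  also have "\<dots> = 2 * pi * real M * (X + Y)" by (simp add: L_def algebra_simps)
  finally have intb: "integral {-1..1} (\<lambda>t. cmod (p' t)) \<le> 2 * pi * real M * (X + Y)" .
  have h0: "0 \<le> fill_dist N tp" by (rule fill_dist_nonneg[OF N1 rng])
  have "cmod (\<Sum>j\<in>I. cnj (y j) * (\<Sum>k\<in>I. err_mat N tp j k * x k))
      = cmod ((\<Sum>n\<in>{1..N}. complex_of_real (tau N tp n) * p (tp n)) - integral {-1..1} p / 2)"
    unfolding lhs by (simp only: norm_minus_cancel)
  also have "\<dots> \<le> fill_dist N tp * integral {-1..1} (\<lambda>t. cmod (p' t))" by (rule core)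
  also have "\<dots> \<le> fill_dist N tp * (2 * pi * real M * (X + Y))"
    by (rule mult_left_mono[OF intb h0])
  finally show ?thesis unfolding I_def X_def Y_def by (simp add: mult_ac)
qed



lemma err_herm: "err_mat N tp k j = cnj (err_mat N tp j k)"
  unfolding err_mat_alt by (simp add: mult_ac)

lemma opbound:
  fixes tp :: "nat \<Rightarrow> real"
  assumes N1: "N \<ge> 1" and inj: "inj_on tp {1..N}" and rng: "tp ` {1..N} \<subseteq> {-1..1}"
    and M1: "M \<ge> 1" and X1: "(\<Sum>k\<in>idx M. (cmod (x k))\<^sup>2) \<le> 1"
  shows "sqrt (\<Sum>j\<in>idx M. (cmod (\<Sum>k\<in>idx M. err_mat N tp j k * x k))\<^sup>2)
     \<le> 4 * pi * fill_dist N tp * real M"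
proof -
  define I where "I = idx M"
  define y where "y j = (\<Sum>k\<in>I. err_mat N tp j k * x k)" for j
  define Y where "Y = (\<Sum>j\<in>I. (cmod (y j))\<^sup>2)"
  define r where "r = sqrt Y"
  define h where "h = fill_dist N tp"
  have h0: "0 \<le> h" unfolding h_def by (rule fill_dist_nonneg[OF N1 rng])
  have Y0: "0 \<le> Y" unfolding Y_def by (intro sum_nonneg) auto
  have c0: "0 \<le> 4 * pi * h * real M" using h0 by simp
  show ?thesis
  proof (cases "Y = 0")
    case True
    then show ?thesis using c0 by (simp add: Y_def y_def I_def h_def)
  next
    case False
    then have Ypos: "Y > 0" using Y0 by simp
    have rpos: "r > 0" using Ypos by (simp add: r_def)
    have rr: "r\<^sup>2 = Y" using Y0 by (simp add: r_def)
    define x' where "x' k = complex_of_real r * x k" for k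
    have B: "cmod (\<Sum>j\<in>I. cnj (y j) * (\<Sum>k\<in>I. err_mat N tp j k * x' k))
       \<le> h * (2 * pi * real M) * ((\<Sum>k\<in>I. (cmod (x' k))\<^sup>2) + (\<Sum>k\<in>I. (cmod (y k))\<^sup>2))"
      unfolding I_def h_def by (rule bilin_bound[OF N1 inj rng M1])
    have "(\<Sum>j\<in>I. cnj (y j) * (\<Sum>k\<in>I. err_mat N tp j k * x' k))
        = complex_of_real r * (\<Sum>j\<in>I. cnj (y j) * y j)"
    proof -
      have "(\<Sum>k\<in>I. err_mat N tp j k * x' k) = complex_of_real r * y j" for j
        unfolding x'_def y_def by (simp add: sum_distrib_left mult_ac)
      then show ?thesis by (simp add: sum_distrib_left mult_ac)
    qed
    also have "(\<Sum>j\<in>I. cnj (y j) * y j) = complex_of_real Y"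
      unfolding Y_def of_real_sum
      by (intro sum.cong refl) (metis complex_norm_square mult.commute)
    finally have L: "cmod (\<Sum>j\<in>I. cnj (y j) * (\<Sum>k\<in>I. err_mat N tp j k * x' k)) = r * Y"
      using rpos Y0 by (simp add: norm_mult)
    have "(\<Sum>k\<in>I. (cmod (x' k))\<^sup>2) = r\<^sup>2 * (\<Sum>k\<in>I. (cmod (x k))\<^sup>2)"
      unfolding x'_def by (simp add: norm_mult power_mult_distrib sum_distrib_left abs_of_pos[OF rpos])
    also have "\<dots> \<le> r\<^sup>2" using X1 unfolding I_def by (simp add: mult_left_le)
    finally have X': "(\<Sum>k\<in>I. (cmod (x' k))\<^sup>2) \<le> Y" using rr by simp
    have "r * Y \<le> h * (2 * pi * real M) * (Y + Y)"
    proof -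
      have "h * (2 * pi * real M) * ((\<Sum>k\<in>I. (cmod (x' k))\<^sup>2) + (\<Sum>k\<in>I. (cmod (y k))\<^sup>2))
          \<le> h * (2 * pi * real M) * (Y + Y)"
        using X' h0 unfolding Y_def[symmetric] by (intro mult_left_mono) auto
      then show ?thesis using B L by linarith
    qed
    then have "r * Y \<le> (4 * pi * h * real M) * Y" by (simp add: algebra_simps)
    then have "r \<le> 4 * pi * h * real M" using Ypos by simp
    then show ?thesis unfolding r_def Y_def y_def I_def h_def by (simp add: mult_ac)
  qed
qed


lemma card_idx: "card (idx M) = 2 * M"
  by (simp add: idx_def)

lemma row_bound:
  fixes tp :: "nat \<Rightarrow> real"
  assumes N1: "N \<ge> 1" and inj: "inj_on tp {1..N}" and rng: "tp ` {1..N} \<subseteq> {-1..1}"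
    and M1: "M \<ge> 1" and j: "j \<in> idx M"
  shows "(\<Sum>k\<in>idx M. cmod (err_mat N tp j k)) \<le> sqrt (2 * real M) * (4 * pi * fill_dist N tp * real M)"
proof -
  define I where "I = idx M"
  have fin: "finite I" by (simp add: I_def idx_def)
  define e where "e l = (if l = j then 1 else 0 :: complex)" for l
  have ecol: "(\<Sum>l\<in>I. err_mat N tp k l * e l) = err_mat N tp k j" for k
  proof -
    have "(\<Sum>l\<in>I. err_mat N tp k l * e l) = (\<Sum>l\<in>I. if l = j then err_mat N tp k l else 0)"
      by (intro sum.cong) (auto simp: e_def)
    also have "\<dots> = err_mat N tp k j" using fin j by (simp add: I_def)
    finally show ?thesis .
  qed
  have e1: "(\<Sum>k\<in>idx M. (cmod (e k))\<^sup>2) \<le> 1"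
  proof -
    have "(\<Sum>k\<in>idx M. (cmod (e k))\<^sup>2) = (\<Sum>k\<in>idx M. if k = j then 1 else 0)"
      by (intro sum.cong) (auto simp: e_def)
    also have "\<dots> = 1" using j fin by (simp add: I_def)
    finally show ?thesis by simp
  qed
  have "sqrt (\<Sum>k\<in>I. (cmod (err_mat N tp k j))\<^sup>2) \<le> 4 * pi * fill_dist N tp * real M"
    using opbound[OF N1 inj rng M1 e1] unfolding I_def[symmetric] ecol .
  moreover have "(\<Sum>k\<in>I. (cmod (err_mat N tp k j))\<^sup>2) = (\<Sum>k\<in>I. (cmod (err_mat N tp j k))\<^sup>2)"
    by (intro sum.cong refl) (metis err_herm complex_mod_cnj)
  ultimately have S: "sqrt (\<Sum>k\<in>I. (cmod (err_mat N tp j k))\<^sup>2) \<le> 4 * pi * fill_dist N tp * real M" by simp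
  have "(\<Sum>k\<in>I. 1 * cmod (err_mat N tp j k))\<^sup>2 \<le> (\<Sum>k\<in>I. 1\<^sup>2) * (\<Sum>k\<in>I. (cmod (err_mat N tp j k))\<^sup>2)"
    by (rule Cauchy_Schwarz_ineq_sum)
  then have "(\<Sum>k\<in>I. cmod (err_mat N tp j k))\<^sup>2 \<le> (2 * real M) * (\<Sum>k\<in>I. (cmod (err_mat N tp j k))\<^sup>2)"
    by (simp add: I_def card_idx)
  then have "(\<Sum>k\<in>I. cmod (err_mat N tp j k)) \<le> sqrt ((2 * real M) * (\<Sum>k\<in>I. (cmod (err_mat N tp j k))\<^sup>2))"
    by (rule real_le_rsqrt)
  also have "\<dots> = sqrt (2 * real M) * sqrt (\<Sum>k\<in>I. (cmod (err_mat N tp j k))\<^sup>2)"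
    by (simp add: real_sqrt_mult)
  also have "\<dots> \<le> sqrt (2 * real M) * (4 * pi * fill_dist N tp * real M)"
    by (intro mult_left_mono S) auto
  finally show ?thesis unfolding I_def .
qed

theorem lemma8p3:
  shows "\<exists>C::real. \<forall>N::nat. \<forall>tp::nat \<Rightarrow> real. \<forall>M::nat.
     N \<ge> 1 \<longrightarrow> M \<ge> 1 \<longrightarrow> inj_on tp {1..N} \<longrightarrow> tp ` {1..N} \<subseteq> {-1..1} \<longrightarrow>
     fill_dist N tp * real M \<le> 1 \<longrightarrow>
       E2 N tp M \<le> C * fill_dist N tp * real M \<and>
       Einf N tp M \<le> C * fill_dist N tp * real M powr (3/2)"
proof (intro exI[of _ 30] allI impI conjI)
  fix N M :: nat and tp :: "nat \<Rightarrow> real"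
  assume N1: "N \<ge> 1" and M1: "M \<ge> 1" and inj: "inj_on tp {1..N}" and rng: "tp ` {1..N} \<subseteq> {-1..1}"
  define h where "h = fill_dist N tp"
  have h0: "0 \<le> h" unfolding h_def by (rule fill_dist_nonneg[OF N1 rng])
  have pi4: "pi < 4" by (rule pi_less_4)
  have hM: "0 \<le> h * real M" using h0 by simp
  have c1: "4 * pi * h * real M \<le> 30 * h * real M"
  proof -
    have "4 * pi * (h * real M) \<le> 30 * (h * real M)"
      by (rule mult_right_mono) (use pi4 hM in auto)
    then show ?thesis by (simp add: mult_ac)
  qed
  show "E2 N tp M \<le> 30 * fill_dist N tp * real M"
    unfolding E2_def op_norm2_def
  proof (rule cSup_least)
    show "{sqrt (\<Sum>j\<in>idx M. (cmod (\<Sum>k\<in>idx M. err_mat N tp j k * x k))\<^sup>2) |x.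
        (\<Sum>k\<in>idx M. (cmod (x k))\<^sup>2) \<le> 1} \<noteq> {}"
      by (rule ex_in_conv[THEN iffD1], rule exI[of _ "sqrt (\<Sum>j\<in>idx M. (cmod (\<Sum>k\<in>idx M. err_mat N tp j k * 0))\<^sup>2)"])
         (auto intro!: exI[of _ "\<lambda>_. 0"])
  next
    fix v assume "v \<in> {sqrt (\<Sum>j\<in>idx M. (cmod (\<Sum>k\<in>idx M. err_mat N tp j k * x k))\<^sup>2) |x.
        (\<Sum>k\<in>idx M. (cmod (x k))\<^sup>2) \<le> 1}"
    then obtain x where v: "v = sqrt (\<Sum>j\<in>idx M. (cmod (\<Sum>k\<in>idx M. err_mat N tp j k * x k))\<^sup>2)"
      and x: "(\<Sum>k\<in>idx M. (cmod (x k))\<^sup>2) \<le> 1" by blast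
    have "v \<le> 4 * pi * h * real M" unfolding v h_def by (rule opbound[OF N1 inj rng M1 x])
    then show "v \<le> 30 * fill_dist N tp * real M" using c1 unfolding h_def by linarith
  qed
  have ne: "idx M \<noteq> {}" using M1 by (auto simp: idx_def intro!: exI[of _ 0])
  have fin: "finite (idx M)" by (simp add: idx_def)
  have s2: "sqrt 2 \<le> 3 / 2"
    by (rule power2_le_imp_le) (auto simp: power2_eq_square)
  have "sqrt (2 * real M) * (4 * pi * h * real M) = (4 * pi * sqrt 2) * (h * (real M * sqrt (real M)))"
    by (simp add: real_sqrt_mult mult_ac)
  also have "\<dots> \<le> 30 * (h * (real M * sqrt (real M)))"
  proof (rule mult_right_mono)
    have "4 * pi * sqrt 2 \<le> 4 * 4 * (3 / 2)"
      using pi4 s2 by (intro mult_mono) auto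
    then show "4 * pi * sqrt 2 \<le> 30" by simp
    show "0 \<le> h * (real M * sqrt (real M))" using h0 by simp
  qed
  also have "real M * sqrt (real M) = real M powr (3/2)"
  proof -
    have e: "(3/2::real) = 1 + 1/2" by simp
    have "real M powr (3/2) = real M powr (1 + 1/2)" by (subst e) (rule refl)
    also have "\<dots> = real M powr 1 * real M powr (1/2)" by (rule powr_add)
    also have "\<dots> = real M * sqrt (real M)" using M1 by (simp add: powr_half_sqrt)
    finally show ?thesis by simp
  qed
  finally have row: "sqrt (2 * real M) * (4 * pi * h * real M) \<le> 30 * h * real M powr (3/2)"
    by (simp add: mult_ac)
  show "Einf N tp M \<le> 30 * fill_dist N tp * real M powr (3/2)"
    unfolding Einf_def op_norm_inf_def using ne fin
    by (auto simp: Max_le_iff intro!: order.trans[OF row_bound[OF N1 inj rng M1] row[unfolded h_def]])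
qed
end
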